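(* For every integer $\ell\ge2$ there exist two trees $T_1,T_2$ with the same number of vertices such that $D(T_1)>D(T_2)$ and $W_{2\ell}(T_1)>W_{2\ell}(T_2)$. In particular, $D(T_1)<D(T_2)$ does not in general imply $W_{2\ell}(T_1)>W_{2\ell}(T_2)$ for trees of the same order.
   Context: For a tree $T$, $D(T)=\sum_{x,y\in V(T)} d(x,y)$, where $d$ is the graph distance, and $W_m(T)$ denotes the number of closed walks of length $m$ in $T$. *)

theory Defs
  imports Main
begin

definition simple_graph :: "'a set \<Rightarrow> ('a \<Rightarrow> 'a \<Rightarrow> bool) \<Rightarrow> bool" where
  "simple_graph V E \<longleftrightarrow> finite V \<and> (\<forall>x y. E x y \<longrightarrow> x \<in> V \<and> y \<in> V)
     \<and> (\<forall>x y. E x y \<longrightarrow> E y x) \<and> (\<forall>x. \<not> E x x)"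

text \<open>A walk is a nonempty vertex list with consecutive vertices adjacent;
  its length is the number of steps, i.e. length xs - 1.\<close>

definition is_walk :: "'a set \<Rightarrow> ('a \<Rightarrow> 'a \<Rightarrow> bool) \<Rightarrow> 'a list \<Rightarrow> bool" where
  "is_walk V E xs \<longleftrightarrow> xs \<noteq> [] \<and> set xs \<subseteq> V
     \<and> (\<forall>i. Suc i < length xs \<longrightarrow> E (xs ! i) (xs ! Suc i))"

definition connected_graph :: "'a set \<Rightarrow> ('a \<Rightarrow> 'a \<Rightarrow> bool) \<Rightarrow> bool" where
  "connected_graph V E \<longleftrightarrow> V \<noteq> {} \<and>
     (\<forall>x\<in>V. \<forall>y\<in>V. \<exists>xs. is_walk V E xs \<and> hd xs = x \<and> last xs = y)"

text \<open>A cycle: closed walk of length at least 3 whose vertices, apart from the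
  repeated endpoint, are pairwise distinct.\<close>

definition is_cycle :: "'a set \<Rightarrow> ('a \<Rightarrow> 'a \<Rightarrow> bool) \<Rightarrow> 'a list \<Rightarrow> bool" where
  "is_cycle V E xs \<longleftrightarrow> is_walk V E xs \<and> length xs \<ge> 4 \<and> hd xs = last xs
     \<and> distinct (tl xs)"

definition is_tree :: "'a set \<Rightarrow> ('a \<Rightarrow> 'a \<Rightarrow> bool) \<Rightarrow> bool" where
  "is_tree V E \<longleftrightarrow> simple_graph V E \<and> connected_graph V E \<and> (\<nexists>xs. is_cycle V E xs)"

definition dist :: "'a set \<Rightarrow> ('a \<Rightarrow> 'a \<Rightarrow> bool) \<Rightarrow> 'a \<Rightarrow> 'a \<Rightarrow> nat" where
  "dist V E x y = (LEAST n. \<exists>xs. is_walk V E xs \<and> hd xs = x \<and> last xs = y \<and> length xs = Suc n)"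

text \<open>D(T) = sum over all (ordered) pairs x, y of vertices of d(x,y).\<close>

definition total_dist :: "'a set \<Rightarrow> ('a \<Rightarrow> 'a \<Rightarrow> bool) \<Rightarrow> nat" where
  "total_dist V E = (\<Sum>x\<in>V. \<Sum>y\<in>V. dist V E x y)"

definition closed_walks :: "nat \<Rightarrow> 'a set \<Rightarrow> ('a \<Rightarrow> 'a \<Rightarrow> bool) \<Rightarrow> nat" where
  "closed_walks m V E = card {xs. is_walk V E xs \<and> length xs = Suc m \<and> hd xs = last xs}"

end

theory Submission imports Defs begin

inductive reach :: "'a set \<Rightarrow> ('a \<Rightarrow> 'a \<Rightarrow> bool) \<Rightarrow> 'a \<Rightarrow> 'a \<Rightarrow> nat \<Rightarrow> bool" for V E where
  r0: "x \<in> V \<Longrightarrow> reach V E x x 0"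
| rs: "E x y \<Longrightarrow> x \<in> V \<Longrightarrow> reach V E y z n \<Longrightarrow> reach V E x z (Suc n)"

lemma is_walk_Cons:
  assumes "xs \<noteq> []"
  shows "is_walk V E (x#xs) \<longleftrightarrow> x \<in> V \<and> E x (hd xs) \<and> is_walk V E xs"
proof
  assume w: "is_walk V E (x#xs)"
  have "E ((x#xs)!0) ((x#xs)!Suc 0)" using w assms unfolding is_walk_def by force
  hence "E x (hd xs)" using assms by (simp add: hd_conv_nth)
  moreover have "\<forall>i. Suc i < length xs \<longrightarrow> E (xs ! i) (xs ! Suc i)"
  proof (intro allI impI)
    fix i assume "Suc i < length xs"
    hence "Suc (Suc i) < length (x#xs)" by simp
    hence "E ((x#xs)!Suc i) ((x#xs)!Suc (Suc i))" using w unfolding is_walk_def by blast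
    thus "E (xs ! i) (xs ! Suc i)" by simp
  qed
  ultimately show "x \<in> V \<and> E x (hd xs) \<and> is_walk V E xs" using w assms unfolding is_walk_def by auto
next
  assume a: "x \<in> V \<and> E x (hd xs) \<and> is_walk V E xs"
  have "\<forall>i. Suc i < length (x#xs) \<longrightarrow> E ((x#xs) ! i) ((x#xs) ! Suc i)"
  proof (intro allI impI)
    fix i assume i: "Suc i < length (x#xs)"
    show "E ((x#xs) ! i) ((x#xs) ! Suc i)"
    proof (cases i)
      case 0 thus ?thesis using a assms by (simp add: hd_conv_nth)
    next
      case (Suc j) thus ?thesis using a i unfolding is_walk_def by simp
    qed
  qed
  thus "is_walk V E (x#xs)" using a unfolding is_walk_def by auto
qed

lemma reach_walk: "reach V E x y n \<Longrightarrow> \<exists>xs. is_walk V E xs \<and> hd xs = x \<and> last xs = y \<and> length xs = Suc n"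
proof (induction rule: reach.induct)
  case (r0 x) thus ?case by (intro exI[of _ "[x]"]) (simp add: is_walk_def)
next
  case (rs x y z n)
  then obtain xs where xs: "is_walk V E xs" "hd xs = y" "last xs = z" "length xs = Suc n" by blast
  hence ne: "xs \<noteq> []" by auto
  show ?case using rs xs ne by (intro exI[of _ "x#xs"]) (simp add: is_walk_Cons)
qed

lemma reach_in: "reach V E x y n \<Longrightarrow> x \<in> V \<and> y \<in> V"
  by (induction rule: reach.induct) auto

lemma reach_trans: "reach V E x y a \<Longrightarrow> reach V E y z b \<Longrightarrow> reach V E x z (a+b)"
  by (induction rule: reach.induct) (auto intro: reach.rs)

lemma reach_snoc: "reach V E x y n \<Longrightarrow> E y z \<Longrightarrow> z \<in> V \<Longrightarrow> reach V E x z (Suc n)"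
proof -
  assume a: "reach V E x y n" "E y z" "z \<in> V"
  have "reach V E y z (Suc 0)" using a reach_in[OF a(1)] by (intro reach.rs[of E y z]) (auto intro: reach.r0)
  from reach_trans[OF a(1) this] show ?thesis by simp
qed

lemma reach_sym:
  assumes "\<And>x y. E x y \<Longrightarrow> E y x" "\<And>x y. E x y \<Longrightarrow> x \<in> V \<and> y \<in> V"
  shows "reach V E x y n \<Longrightarrow> reach V E y x n"
proof (induction rule: reach.induct)
  case (r0 x) thus ?case by (rule reach.r0)
next
  case (rs x y z n)
  thus ?case using assms reach_snoc by metis
qed

lemma dist_le: assumes "reach V E x y n" shows "dist V E x y \<le> n"
proof -
  obtain xs where "is_walk V E xs \<and> hd xs = x \<and> last xs = y \<and> length xs = Suc n"
    using reach_walk[OF assms] by blast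
  thus ?thesis unfolding dist_def by (intro Least_le) blast
qed

lemma walk_lip:
  assumes "is_walk V E xs" "\<And>u v. E u v \<Longrightarrow> \<bar>f u - f v\<bar> \<le> (1::int)"
  shows "j < length xs \<Longrightarrow> \<bar>f (xs!0) - f (xs!j)\<bar> \<le> int j"
proof (induction j)
  case 0 thus ?case by simp
next
  case (Suc j)
  have "E (xs!j) (xs!Suc j)" using assms(1) Suc.prems unfolding is_walk_def by blast
  hence "\<bar>f (xs!j) - f (xs!Suc j)\<bar> \<le> 1" using assms(2) by blast
  thus ?case using Suc by simp
qed

lemma dist_ge:
  assumes "reach V E x y n" "\<And>u v. E u v \<Longrightarrow> \<bar>f u - f v\<bar> \<le> (1::int)"
  shows "\<bar>f x - f y\<bar> \<le> int (dist V E x y)"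
proof -
  have "\<exists>xs. is_walk V E xs \<and> hd xs = x \<and> last xs = y \<and> length xs = Suc (dist V E x y)"
    unfolding dist_def by (rule LeastI_ex) (use reach_walk[OF assms(1)] in blast)
  then obtain xs where xs: "is_walk V E xs" "hd xs = x" "last xs = y" "length xs = Suc (dist V E x y)" by blast
  have ne: "xs \<noteq> []" using xs by auto
  have "\<bar>f (xs!0) - f (xs!(dist V E x y))\<bar> \<le> int (dist V E x y)"
    using walk_lip[where f=f, OF xs(1) assms(2)] xs(4) by simp
  moreover have "xs!0 = x" using xs ne by (simp add: hd_conv_nth)
  moreover have "xs!(dist V E x y) = y" using xs ne by (simp add: last_conv_nth)
  ultimately show ?thesis by simp
qed


definition ptE :: "nat \<Rightarrow> (nat \<Rightarrow> nat) \<Rightarrow> nat \<Rightarrow> nat \<Rightarrow> bool" where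
  "ptE n par x y \<longleftrightarrow> x < n \<and> y < n \<and> ((0 < y \<and> x = par y) \<or> (0 < x \<and> y = par x))"

lemma ptE_sym: "ptE n par x y \<Longrightarrow> ptE n par y x"
  unfolding ptE_def by auto

lemma ptE_in: "ptE n par x y \<Longrightarrow> x \<in> {..<n} \<and> y \<in> {..<n}"
  unfolding ptE_def by auto

lemma pt_simple:
  assumes par: "\<And>v. 0<v \<Longrightarrow> v<n \<Longrightarrow> par v < v"
  shows "simple_graph {..<n} (ptE n par)"
  unfolding simple_graph_def ptE_def using par by auto (metis less_irrefl)

lemma pt_reach0:
  assumes par: "\<And>v. 0<v \<Longrightarrow> v<n \<Longrightarrow> par v < v"
  shows "v < n \<Longrightarrow> \<exists>d. reach {..<n} (ptE n par) v 0 d"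
proof (induction v rule: less_induct)
  case (less v)
  show ?case
  proof (cases "v = 0")
    case True thus ?thesis using less by (auto intro: reach.r0)
  next
    case False
    hence p: "par v < v" using par less by auto
    then obtain d where d: "reach {..<n} (ptE n par) (par v) 0 d" using less by auto
    have "ptE n par v (par v)" using p less False unfolding ptE_def by auto
    hence "reach {..<n} (ptE n par) v 0 (Suc d)" using less d by (intro reach.rs) auto
    thus ?thesis by blast
  qed
qed

lemma pt_reach:
  assumes par: "\<And>v. 0<v \<Longrightarrow> v<n \<Longrightarrow> par v < v"
  and "x < n" "y < n"
  shows "\<exists>d. reach {..<n} (ptE n par) x y d"
proof -
  obtain a where a: "reach {..<n} (ptE n par) x 0 a" using pt_reach0[of n par, OF par] assms by blast
  obtain b where b: "reach {..<n} (ptE n par) y 0 b" using pt_reach0[of n par, OF par] assms by blast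
  have b': "reach {..<n} (ptE n par) 0 y b" using reach_sym[where E="ptE n par" and V="{..<n}"] ptE_sym ptE_in b by blast
  show ?thesis using reach_trans[OF a b'] by blast
qed

lemma pt_connected:
  assumes par: "\<And>v. 0<v \<Longrightarrow> v<n \<Longrightarrow> par v < v" and "0 < n"
  shows "connected_graph {..<n} (ptE n par)"
  unfolding connected_graph_def
proof (intro conjI ballI)
  show "{..<n} \<noteq> {}" using assms by auto
next
  fix x y assume "x \<in> {..<n}" "y \<in> {..<n}"
  then obtain d where "reach {..<n} (ptE n par) x y d" using pt_reach[of n par, OF par] by auto
  from reach_walk[OF this] show "\<exists>xs. is_walk {..<n} (ptE n par) xs \<and> hd xs = x \<and> last xs = y" by blast
qed

lemma pt_nocycle:
  assumes par: "\<And>v. 0<v \<Longrightarrow> v<n \<Longrightarrow> par v < v" and cyc: "is_cycle {..<n} (ptE n par) xs"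
  shows False
proof -
  let ?E = "ptE n par"
  from cyc have W: "is_walk {..<n} ?E xs" and L: "length xs \<ge> 4" and HL: "hd xs = last xs"
    and D: "distinct (tl xs)" by (auto simp: is_cycle_def)
  define m where "m = length xs - 1"
  have m3: "m \<ge> 3" using L m_def by simp
  have ltl: "length (tl xs) = m" using m_def by simp
  have tln: "\<And>i. i < m \<Longrightarrow> tl xs ! i = xs ! Suc i" using L m_def by (simp add: nth_tl)
  have ne: "xs \<noteq> []" using L by auto
  have x0: "xs ! 0 = xs ! m" using HL ne m_def by (simp add: hd_conv_nth last_conv_nth)
  have edge: "\<And>i. Suc i < length xs \<Longrightarrow> ?E (xs!i) (xs!Suc i)" using W by (simp add: is_walk_def)
  define M where "M = Max (set (tl xs))"
  have fin: "finite (set (tl xs))" by simp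
  have "length (tl xs) \<ge> 3" using ltl m3 by simp
  hence nem: "set (tl xs) \<noteq> {}" by (cases "tl xs") auto
  have "M \<in> set (tl xs)" using M_def Max_in fin nem by blast
  then obtain i where i: "i < m" "tl xs ! i = M" by (metis in_set_conv_nth ltl)
  have Mi: "xs ! Suc i = M" using i tln by simp
  define ia where "ia = (if i = 0 then m - 1 else i - 1)"
  define ib where "ib = (if Suc i < m then Suc i else 0)"
  have ia: "ia < m" "tl xs ! ia = xs ! i"
    using i m3 tln x0 unfolding ia_def by auto
  have ib: "ib < m" using i m3 unfolding ib_def by auto
  have Ea: "?E (tl xs ! ia) M" using edge[of i] i m_def Mi ia by simp
  have Eb: "?E M (tl xs ! ib)"
  proof (cases "Suc i < m")
    case True
    hence "?E (xs ! Suc i) (xs ! Suc (Suc i))" using edge m_def by simp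
    thus ?thesis using True Mi tln unfolding ib_def by simp
  next
    case False
    hence "Suc i = m" using i by simp
    hence "M = xs ! 0" using Mi x0 by simp
    moreover have "?E (xs ! 0) (xs ! Suc 0)" using edge m_def m3 by simp
    ultimately show ?thesis using False tln m3 unfolding ib_def by simp
  qed
  have key: "\<And>u. ?E u M \<Longrightarrow> u \<le> M \<Longrightarrow> u = par M"
  proof -
    fix u assume e: "?E u M" and le: "u \<le> M"
    show "u = par M"
    proof (rule ccontr)
      assume "u \<noteq> par M"
      hence "0 < u" "M = par u" "u < n" using e unfolding ptE_def by auto
      hence "M < u" using par by auto
      thus False using le by simp
    qed
  qed
  have "tl xs ! ia \<le> M" using M_def fin ia ltl by (metis Max_ge nth_mem)
  hence a: "tl xs ! ia = par M" using key Ea by blast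
  have "tl xs ! ib \<le> M" using M_def fin ib ltl by (metis Max_ge nth_mem)
  hence b: "tl xs ! ib = par M" using key ptE_sym[OF Eb] by blast
  have "tl xs ! ia = tl xs ! ib" using a b by simp
  hence "ia = ib" using D ia(1) ib ltl by (simp add: nth_eq_iff_index_eq)
  moreover have "ia \<noteq> ib" using i m3 unfolding ia_def ib_def by auto
  ultimately show False by simp
qed

lemma pt_tree:
  assumes par: "\<And>v. 0<v \<Longrightarrow> v<n \<Longrightarrow> par v < v" and "0 < n"
  shows "is_tree {..<n} (ptE n par)"
  unfolding is_tree_def using pt_simple[OF par] pt_connected[OF par assms(2)] pt_nocycle[OF par] by blast


definition S :: "nat \<Rightarrow> nat" where "S N = (\<Sum>i<N. \<Sum>j<N. (i - j) + (j - i))"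

lemma tri_sum: "2 * (\<Sum>i<N. N - i) = N * (N + 1::nat)"
proof (induction N)
  case 0 thus ?case by simp
next
  case (Suc N)
  have "(\<Sum>i<Suc N. Suc N - i) = (\<Sum>i<N. Suc (N - i)) + 1"
    by (simp add: Suc_diff_le)
  also have "(\<Sum>i<N. Suc (N - i)) = (\<Sum>i<N. (N - i) + 1)" by simp
  also have "\<dots> = (\<Sum>i<N. N - i) + N" by (simp only: sum.distrib) simp
  finally show ?case using Suc by simp
qed

lemma S_formula: "3 * S N + N = N^3"
proof (induction N)
  case 0 thus ?case by (simp add: S_def)
next
  case (Suc N)
  define d where "d = (\<lambda>i j::nat. (i - j) + (j - i))"
  have dNN: "d N N = 0" by (simp add: d_def)
  have SS: "S M = (\<Sum>i<M. \<Sum>j<M. d i j)" for M unfolding S_def d_def by simp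
  have "S (Suc N) = (\<Sum>i<N. (\<Sum>j<N. d i j) + d i N) + ((\<Sum>j<N. d N j) + d N N)"
    unfolding SS by (simp only: sum.lessThan_Suc)
  also have "\<dots> = S N + (\<Sum>i<N. d i N) + (\<Sum>j<N. d N j)"
    unfolding SS using dNN by (simp add: sum.distrib)
  also have "(\<Sum>i<N. d i N) = (\<Sum>i<N. N - i)" by (rule sum.cong) (auto simp: d_def)
  also have "(\<Sum>j<N. d N j) = (\<Sum>i<N. N - i)" by (rule sum.cong) (auto simp: d_def)
  finally have "S (Suc N) = S N + N * (N+1)" using tri_sum[of N] by simp
  hence "3 * S (Suc N) + Suc N = (3 * S N + N) + 3 * N * (N+1) + 1" by simp
  also have "\<dots> = (Suc N)^3" using Suc by (simp add: power3_eq_cube algebra_simps)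
  finally show ?case .
qed

lemma walks_bound:
  assumes fin: "finite V" and deg: "\<And>x. finite {y. E x y} \<and> card {y. E x y} \<le> d"
  shows "card {xs. is_walk V E xs \<and> length xs = Suc N} \<le> card V * d ^ N"
proof (induction N)
  case 0
  have "{xs. is_walk V E xs \<and> length xs = Suc 0} \<subseteq> (\<lambda>x. [x]) ` V"
    by (auto simp: is_walk_def length_Suc_conv)
  hence "card {xs. is_walk V E xs \<and> length xs = Suc 0} \<le> card ((\<lambda>x. [x]) ` V)"
    using fin by (intro card_mono) auto
  also have "\<dots> \<le> card V" by (rule card_image_le[OF fin])
  finally show ?case by simp
next
  case (Suc N)
  define WN where "WN = {xs. is_walk V E xs \<and> length xs = Suc N}"
  have finW: "finite WN"
    by (rule finite_subset[OF _ finite_lists_length_eq[OF fin, of "Suc N"]]) (auto simp: WN_def is_walk_def)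
  have sub: "{xs. is_walk V E xs \<and> length xs = Suc (Suc N)} \<subseteq> (\<lambda>(xs,y). xs @ [y]) ` (SIGMA xs:WN. {y. E (last xs) y})"
  proof
    fix ys assume ys: "ys \<in> {xs. is_walk V E xs \<and> length xs = Suc (Suc N)}"
    hence w: "is_walk V E ys" and l: "length ys = Suc (Suc N)" by auto
    have ne: "ys \<noteq> []" using l by auto
    have e: "ys = butlast ys @ [last ys]" using ne by simp
    have lb: "length (butlast ys) = Suc N" using l by simp
    have wb: "is_walk V E (butlast ys)"
      unfolding is_walk_def
    proof (intro conjI allI impI)
      show "butlast ys \<noteq> []" using lb by (metis Zero_not_Suc list.size(3))
      show "set (butlast ys) \<subseteq> V" using w in_set_butlastD unfolding is_walk_def by fast
      fix i assume "Suc i < length (butlast ys)"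
      thus "E (butlast ys ! i) (butlast ys ! Suc i)" using w lb l unfolding is_walk_def by (simp add: nth_butlast)
    qed
    have "E (ys ! N) (ys ! Suc N)" using w l unfolding is_walk_def by simp
    moreover have "last (butlast ys) = ys ! N"
    proof -
      have bne: "butlast ys \<noteq> []" using lb by (metis Zero_not_Suc list.size(3))
      hence "last (butlast ys) = butlast ys ! N" using lb by (simp add: last_conv_nth)
      also have "\<dots> = ys ! N" using l by (simp add: nth_butlast)
      finally show ?thesis .
    qed
    moreover have "last ys = ys ! Suc N" using l ne by (simp add: last_conv_nth)
    ultimately have "E (last (butlast ys)) (last ys)" by simp
    hence "(butlast ys, last ys) \<in> (SIGMA xs:WN. {y. E (last xs) y})" using wb lb by (simp add: WN_def)
    thus "ys \<in> (\<lambda>(xs,y). xs @ [y]) ` (SIGMA xs:WN. {y. E (last xs) y})" using e by force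
  qed
  have finS: "finite (SIGMA xs:WN. {y. E (last xs) y})" using finW deg by auto
  have "card {xs. is_walk V E xs \<and> length xs = Suc (Suc N)} \<le> card ((\<lambda>(xs,y). xs @ [y]) ` (SIGMA xs:WN. {y. E (last xs) y}))"
    using sub finS by (intro card_mono) auto
  also have "\<dots> \<le> card (SIGMA xs:WN. {y. E (last xs) y})" using finS by (rule card_image_le)
  also have "\<dots> = (\<Sum>xs\<in>WN. card {y. E (last xs) y})" using finW deg by (simp add: card_SigmaI)
  also have "\<dots> \<le> (\<Sum>xs\<in>WN. d)" using deg by (intro sum_mono) auto
  also have "\<dots> = card WN * d" by simp
  also have "\<dots> \<le> card V * d ^ N * d" using Suc by (simp add: WN_def)
  finally show ?case by (simp add: algebra_simps)
qed

lemma sum_fold: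
  fixes F :: "nat \<Rightarrow> 'b::comm_monoid_add"
  shows "(\<Sum>x<2*m. F (if x < m then x else x - m)) = (\<Sum>i<m. F i) + (\<Sum>i<m. F i)"
proof -
  have U: "{..<2*m} = {..<m} \<union> (\<lambda>i. i + m) ` {..<m}"
  proof
    show "{..<2*m} \<subseteq> {..<m} \<union> (\<lambda>i. i + m) ` {..<m}"
    proof
      fix x assume "x \<in> {..<2*m}"
      thus "x \<in> {..<m} \<union> (\<lambda>i. i + m) ` {..<m}"
        by (cases "x < m") (auto intro!: image_eqI[of x _ "x - m"])
    qed
  qed auto
  have "(\<Sum>x<2*m. F (if x < m then x else x - m))
      = (\<Sum>x<m. F (if x < m then x else x - m)) + (\<Sum>x\<in>(\<lambda>i. i + m) ` {..<m}. F (if x < m then x else x - m))"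
    unfolding U by (rule sum.union_disjoint) auto
  also have "(\<Sum>x\<in>(\<lambda>i. i + m) ` {..<m}. F (if x < m then x else x - m)) = (\<Sum>i<m. F i)"
    by (subst sum.reindex) (auto simp: inj_on_def)
  finally show ?thesis by simp
qed


definition parB :: "nat \<Rightarrow> nat" where "parB v = (if v < 1595 then v - 1 else 0)"
definition parC :: "nat \<Rightarrow> nat" where "parC v = (if v < 1000 then v - 1 else v - 1000)"

lemma parB_lt: "0 < v \<Longrightarrow> v < 2000 \<Longrightarrow> parB v < v" by (auto simp: parB_def)
lemma parC_lt: "0 < v \<Longrightarrow> v < 2000 \<Longrightarrow> parC v < v" by (auto simp: parC_def)

lemma treeB: "is_tree {..<2000} (ptE 2000 parB)" by (rule pt_tree) (auto simp: parB_lt)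
lemma treeC: "is_tree {..<2000} (ptE 2000 parC)" by (rule pt_tree) (auto simp: parC_lt)

lemma distB_ge:
  assumes "x < 1595" "y < 1595"
  shows "(x - y) + (y - x) \<le> dist {..<2000} (ptE 2000 parB) x y"
proof -
  define f where "f = (\<lambda>v::nat. int (if v < 1595 then v else 0))"
  have lip: "\<bar>f u - f v\<bar> \<le> 1" if "ptE 2000 parB u v" for u v
    using that unfolding f_def ptE_def parB_def by (auto split: if_splits)
  obtain d where "reach {..<2000} (ptE 2000 parB) x y d"
    using pt_reach[of 2000 parB] parB_lt assms by fastforce
  from dist_ge[OF this, of f] lip have "\<bar>f x - f y\<bar> \<le> int (dist {..<2000} (ptE 2000 parB) x y)" by blast
  thus ?thesis using assms unfolding f_def by auto
qed

lemma totalB: "S 1595 \<le> total_dist {..<2000} (ptE 2000 parB)"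
proof -
  let ?d = "dist {..<2000} (ptE 2000 parB)"
  have "S 1595 \<le> (\<Sum>x<1595. \<Sum>y<1595. ?d x y)"
    unfolding S_def by (intro sum_mono distB_ge) auto
  also have "\<dots> \<le> (\<Sum>x<1595. \<Sum>y<2000. ?d x y)"
    by (intro sum_mono sum_mono2) auto
  also have "\<dots> \<le> (\<Sum>x<2000. \<Sum>y<2000. ?d x y)"
    by (intro sum_mono2) auto
  finally show ?thesis unfolding total_dist_def by simp
qed

definition gC :: "nat \<Rightarrow> nat" where "gC x = (if x < 1000 then x else x - 1000)"

lemma reachC_spine:
  "j < 1000 \<Longrightarrow> i \<le> j \<Longrightarrow> reach {..<2000} (ptE 2000 parC) i j (j - i)"
proof (induction j arbitrary: i)
  case 0 thus ?case by (auto intro: reach.r0)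
next
  case (Suc j)
  show ?case
  proof (cases "i = Suc j")
    case True thus ?thesis using Suc by (auto intro: reach.r0)
  next
    case False
    hence "reach {..<2000} (ptE 2000 parC) i j (j - i)" using Suc by auto
    moreover have "ptE 2000 parC j (Suc j)" using Suc unfolding ptE_def parC_def by auto
    ultimately have "reach {..<2000} (ptE 2000 parC) i (Suc j) (Suc (j - i))"
      using Suc by (intro reach_snoc) auto
    thus ?thesis using False Suc by (simp add: Suc_diff_le)
  qed
qed

lemma reachC_sym: "reach {..<2000} (ptE 2000 parC) x y n \<Longrightarrow> reach {..<2000} (ptE 2000 parC) y x n"
  using reach_sym[where E="ptE 2000 parC" and V="{..<2000}"] ptE_sym ptE_in by blast

lemma reachC_sp:
  assumes "i < 1000" "j < 1000"
  shows "reach {..<2000} (ptE 2000 parC) i j ((i - j) + (j - i))"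
proof (cases "i \<le> j")
  case True thus ?thesis using reachC_spine[of j i] assms by simp
next
  case False thus ?thesis using reachC_spine[of i j] assms reachC_sym by fastforce
qed

lemma reachC_g:
  assumes "x < 2000"
  shows "reach {..<2000} (ptE 2000 parC) x (gC x) (if x < 1000 then 0 else 1)"
proof (cases "x < 1000")
  case True thus ?thesis by (auto simp: gC_def intro: reach.r0)
next
  case False
  have "ptE 2000 parC x (x - 1000)" using False assms unfolding ptE_def parC_def by auto
  hence "reach {..<2000} (ptE 2000 parC) x (x - 1000) (Suc 0)"
    using assms by (intro reach.rs[of _ x "x - 1000"]) (auto intro: reach.r0)
  thus ?thesis using False by (simp add: gC_def)
qed

lemma distC_le:
  assumes "x < 2000" "y < 2000"
  shows "dist {..<2000} (ptE 2000 parC) x y \<le> ((gC x - gC y) + (gC y - gC x)) + 2"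
proof -
  have g: "gC x < 1000" "gC y < 1000" using assms by (auto simp: gC_def)
  have r: "reach {..<2000} (ptE 2000 parC) x y
     ((if x < 1000 then 0 else 1) + ((gC x - gC y) + (gC y - gC x)) + (if y < 1000 then 0 else 1))"
    using reach_trans[OF reach_trans[OF reachC_g[OF assms(1)] reachC_sp[OF g]] reachC_sym[OF reachC_g[OF assms(2)]]] .
  show ?thesis using dist_le[OF r] by (auto split: if_splits)
qed

lemma totalC: "total_dist {..<2000} (ptE 2000 parC) \<le> 4 * S 1000 + 8000000"
proof -
  define F where "F = (\<lambda>i j::nat. ((i - j) + (j - i)) + 2)"
  have "total_dist {..<2000} (ptE 2000 parC) \<le> (\<Sum>x<2000. \<Sum>y<2000. F (gC x) (gC y))"
    unfolding total_dist_def F_def by (intro sum_mono distC_le) auto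
  also have "\<dots> = (\<Sum>x<2*1000. \<Sum>y<2*1000. F (gC x) (gC y))" by simp
  also have "\<dots> = (\<Sum>x<2*1000. 2 * (\<Sum>j<1000. F (gC x) j))"
    unfolding gC_def using sum_fold[of "F _" 1000] by (simp add: mult_2)
  also have "\<dots> = 2 * (2 * (\<Sum>i<1000. \<Sum>j<1000. F i j))"
    unfolding gC_def using sum_fold[of "\<lambda>i. 2 * (\<Sum>j<1000. F i j)" 1000] by (simp add: mult_2 sum_distrib_left flip: sum.distrib)
  also have "(\<Sum>i<1000. \<Sum>j<1000. F i j) = S 1000 + 2000000"
  proof -
    have "(\<Sum>i<1000. \<Sum>j<1000. F i j) = (\<Sum>i<1000. \<Sum>j<1000. (i - j) + (j - i)) + (\<Sum>i<1000::nat. \<Sum>j<1000::nat. (2::nat))"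
      unfolding F_def by (simp only: sum.distrib)
    thus ?thesis unfolding S_def by simp
  qed
  finally show ?thesis by simp
qed


lemma card3: "card {a, b, c::nat} \<le> 3"
  by (simp add: card_insert_if)

lemma degC: "finite {y. ptE 2000 parC x y} \<and> card {y. ptE 2000 parC x y} \<le> 3"
proof -
  define T where "T = (if x < 1000 then {x - 1, x + 1, x + 1000} else {x - 1000::nat})"
  have sub: "{y. ptE 2000 parC x y} \<subseteq> T"
    unfolding T_def ptE_def parC_def by (auto split: if_splits)
  have finT: "finite T" unfolding T_def by auto
  have cT: "card T \<le> 3" using card3 unfolding T_def by auto
  show ?thesis using finite_subset[OF sub finT] card_mono[OF finT sub] cT by linarith
qed

lemma walksC: "closed_walks (2*l) {..<2000} (ptE 2000 parC) \<le> 2000 * 9 ^ l"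
proof -
  have fin: "finite {xs. is_walk {..<2000} (ptE 2000 parC) xs \<and> length xs = Suc (2*l)}"
    by (rule finite_subset[OF _ finite_lists_length_eq[of "{..<2000::nat}" "Suc (2*l)"]]) (auto simp: is_walk_def)
  have "closed_walks (2*l) {..<2000} (ptE 2000 parC) \<le> card {xs. is_walk {..<2000} (ptE 2000 parC) xs \<and> length xs = Suc (2*l)}"
    unfolding closed_walks_def by (rule card_mono[OF fin]) auto
  also have "\<dots> \<le> card {..<2000::nat} * 3 ^ (2*l)" by (rule walks_bound) (use degC in auto)
  also have "\<dots> = 2000 * 9 ^ l" by (simp add: power_mult)
  finally show ?thesis .
qed

fun wk :: "nat list \<Rightarrow> nat list" where
  "wk [] = [0]"
| "wk (c # cs) = 0 # c # wk cs"

lemma wk_props: "set cs \<subseteq> {1595..<2000} \<Longrightarrow>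
  is_walk {..<2000} (ptE 2000 parB) (wk cs) \<and> hd (wk cs) = 0 \<and> last (wk cs) = 0 \<and> length (wk cs) = Suc (2 * length cs)"
proof (induction cs)
  case Nil thus ?case by (simp add: is_walk_def)
next
  case (Cons c cs)
  hence IH: "is_walk {..<2000} (ptE 2000 parB) (wk cs)" "hd (wk cs) = 0" "last (wk cs) = 0" "length (wk cs) = Suc (2 * length cs)"
    and c: "1595 \<le> c" "c < 2000" by auto
  have ne: "wk cs \<noteq> []" using IH by auto
  have e1: "ptE 2000 parB 0 c" "ptE 2000 parB c 0" using c unfolding ptE_def parB_def by auto
  have "is_walk {..<2000} (ptE 2000 parB) (c # wk cs)" using IH ne e1 c by (simp add: is_walk_Cons)
  hence "is_walk {..<2000} (ptE 2000 parB) (0 # c # wk cs)" using e1 by (simp add: is_walk_Cons)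
  thus ?case using IH ne by simp
qed

lemma wk_inj: "wk xs = wk ys \<Longrightarrow> xs = ys"
proof (induction xs arbitrary: ys)
  case Nil thus ?case by (cases ys) auto
next
  case (Cons a xs) thus ?case by (cases ys) auto
qed

lemma walksB: "405 ^ l \<le> closed_walks (2*l) {..<2000} (ptE 2000 parB)"
proof -
  define L where "L = {cs. set cs \<subseteq> {1595..<2000::nat} \<and> length cs = l}"
  have cL: "card L = 405 ^ l" unfolding L_def by (simp add: card_lists_length_eq)
  have "inj_on wk L" using wk_inj by (auto simp: inj_on_def)
  hence "card L = card (wk ` L)" by (simp add: card_image)
  also have "\<dots> \<le> closed_walks (2*l) {..<2000} (ptE 2000 parB)"
    unfolding closed_walks_def
  proof (rule card_mono)
    show "finite {xs. is_walk {..<2000} (ptE 2000 parB) xs \<and> length xs = Suc (2 * l) \<and> hd xs = last xs}"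
      by (rule finite_subset[OF _ finite_lists_length_eq[of "{..<2000::nat}" "Suc (2*l)"]]) (auto simp: is_walk_def)
    show "wk ` L \<subseteq> {xs. is_walk {..<2000} (ptE 2000 parB) xs \<and> length xs = Suc (2 * l) \<and> hd xs = last xs}"
      using wk_props unfolding L_def by auto
  qed
  finally show ?thesis using cL by simp
qed

lemma pow_ineq: "2 \<le> l \<Longrightarrow> 2000 * 9 ^ l < (405::nat) ^ l"
proof (induction l rule: nat_induct_at_least)
  case base thus ?case by simp
next
  case (Suc n)
  have "(2000::nat) * 9 ^ Suc n = 9 * (2000 * 9 ^ n)" by simp
  also have "\<dots> < 9 * 405 ^ n" using Suc by simp
  also have "\<dots> \<le> (405::nat) * 405 ^ n" by simp
  finally show ?case by simp
qed

theorem mainTheorem8: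
  fixes l :: nat
  assumes "l \<ge> 2"
  shows "\<exists>(V1 :: nat set) E1 (V2 :: nat set) E2.
           is_tree V1 E1 \<and> is_tree V2 E2 \<and> card V1 = card V2 \<and>
           total_dist V1 E1 > total_dist V2 E2 \<and>
           closed_walks (2 * l) V1 E1 > closed_walks (2 * l) V2 E2"
proof (intro exI conjI)
  show "is_tree {..<2000} (ptE 2000 parB)" by (rule treeB)
  show "is_tree {..<2000} (ptE 2000 parC)" by (rule treeC)
  show "card {..<2000::nat} = card {..<2000::nat}" by simp
  have s1: "3 * S 1595 + 1595 = 1595 ^ 3" by (rule S_formula)
  have s2: "3 * S 1000 + 1000 = 1000 ^ 3" by (rule S_formula)
  have "4 * S 1000 + 8000000 < S 1595" using s1 s2 by simp
  thus "total_dist {..<2000} (ptE 2000 parC) < total_dist {..<2000} (ptE 2000 parB)"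
    using totalB totalC by linarith
  show "closed_walks (2*l) {..<2000} (ptE 2000 parC) < closed_walks (2*l) {..<2000} (ptE 2000 parB)"
    using walksB[of l] walksC[of l] pow_ineq[OF assms] by linarith
qed

end
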